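(* Let $R$ be a commutative multiplicative hyperring with scalar identity $1$, and let $\alpha$ be a good endomorphism of $R$. Then the set $\mathrm{Nil}_\alpha(R)$ of all $\alpha$-nilpotent elements of $R$ is a hyperideal of $R$.
   Context: A multiplicative hyperring is an abelian group $(R,+)$ with a hyperoperation $\circ:R\times R\to \mathcal P^*(R)$ (nonempty subsets) such that $a\circ(b\circ c)=(a\circ b)\circ c$, $a\circ(b+c)\subseteq a\circ b+a\circ c$, $(b+c)\circ a\subseteq b\circ a+c\circ a$, and $a\circ(-b)=(-a)\circ b=-(a\circ b)$. Products of subsets are unions of elementwise products, and $x^n=x\circ\cdots\circ x$ ($n$ factors). Commutative means $a\circ b=b\circ a$. A scalar identity $1$ satisfies $1\circ a=\{a\}$ for all $a$. A hyperideal is a nonempty $I\subseteq R$ closed under subtraction with $r\circ x\subseteq I$ for $r\in R$, $x\in I$. Standing assumption: all hyperideals are $\mathbf C$-hyperideals, i.e. for every finite product $A=r_1\circ\cdots\circ r_n$, $A\cap I\ne\emptyset$ implies $A\subseteq I$. A good endomorphism $\alpha$ satisfies $\alpha(x+y)=\alpha(x)+\alpha(y)$ and $\alpha(x\circ y)=\alpha(x)\circ\alpha(y)$; it is applied to sets elementwise. An element $x$ is $\alpha$-nilpotent if $0\in\alpha(x^n)$ for some integer $n>0$. *)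

theory Defs
  imports Main
begin

text \<open>The abelian group (R,+) is the whole type 'a (class ab_group_add);
  the hyperoperation is hm :: 'a \<Rightarrow> 'a \<Rightarrow> 'a set.\<close>

definition hsetprod :: "('a \<Rightarrow> 'a \<Rightarrow> 'a set) \<Rightarrow> 'a set \<Rightarrow> 'a set \<Rightarrow> 'a set" where
  "hsetprod hm A B = (\<Union>a\<in>A. \<Union>b\<in>B. hm a b)"

definition setsum_add :: "'a::ab_group_add set \<Rightarrow> 'a set \<Rightarrow> 'a set" where
  "setsum_add A B = {a + b | a b. a \<in> A \<and> b \<in> B}"

definition mult_hyperring :: "('a::ab_group_add \<Rightarrow> 'a \<Rightarrow> 'a set) \<Rightarrow> bool" where
  "mult_hyperring hm \<longleftrightarrow>
     (\<forall>a b. hm a b \<noteq> {}) \<and>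
     (\<forall>a b c. hsetprod hm {a} (hm b c) = hsetprod hm (hm a b) {c}) \<and>
     (\<forall>a b c. hm a (b + c) \<subseteq> setsum_add (hm a b) (hm a c)) \<and>
     (\<forall>a b c. hm (b + c) a \<subseteq> setsum_add (hm b a) (hm c a)) \<and>
     (\<forall>a b. hm a (- b) = uminus ` hm a b \<and> hm (- a) b = uminus ` hm a b)"

definition hcommutative :: "('a \<Rightarrow> 'a \<Rightarrow> 'a set) \<Rightarrow> bool" where
  "hcommutative hm \<longleftrightarrow> (\<forall>a b. hm a b = hm b a)"

definition scalar_identity :: "('a \<Rightarrow> 'a \<Rightarrow> 'a set) \<Rightarrow> 'a \<Rightarrow> bool" where
  "scalar_identity hm e \<longleftrightarrow> (\<forall>a. hm e a = {a})"

text \<open>Powers x^n = x o ... o x (n factors), meaningful for n \<ge> 1;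
  the value at n = 0 is an unused convention.\<close>
fun hpow :: "('a \<Rightarrow> 'a \<Rightarrow> 'a set) \<Rightarrow> 'a \<Rightarrow> nat \<Rightarrow> 'a set" where
  "hpow hm x 0 = {x}"
| "hpow hm x (Suc 0) = {x}"
| "hpow hm x (Suc (Suc n)) = hsetprod hm (hpow hm x (Suc n)) {x}"

fun lprod :: "('a \<Rightarrow> 'a \<Rightarrow> 'a set) \<Rightarrow> 'a list \<Rightarrow> 'a set" where
  "lprod hm [] = {}"
| "lprod hm [r] = {r}"
| "lprod hm (r # s # rs) = hsetprod hm {r} (lprod hm (s # rs))"

definition hyperideal :: "('a::ab_group_add \<Rightarrow> 'a \<Rightarrow> 'a set) \<Rightarrow> 'a set \<Rightarrow> bool" where
  "hyperideal hm I \<longleftrightarrow> I \<noteq> {} \<and> (\<forall>x\<in>I. \<forall>y\<in>I. x - y \<in> I) \<and>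
     (\<forall>r. \<forall>x\<in>I. hm r x \<subseteq> I)"

definition C_hyperideal :: "('a::ab_group_add \<Rightarrow> 'a \<Rightarrow> 'a set) \<Rightarrow> 'a set \<Rightarrow> bool" where
  "C_hyperideal hm I \<longleftrightarrow> hyperideal hm I \<and>
     (\<forall>rs. rs \<noteq> [] \<longrightarrow> lprod hm rs \<inter> I \<noteq> {} \<longrightarrow> lprod hm rs \<subseteq> I)"

definition good_endomorphism :: "('a::ab_group_add \<Rightarrow> 'a \<Rightarrow> 'a set) \<Rightarrow> ('a \<Rightarrow> 'a) \<Rightarrow> bool" where
  "good_endomorphism hm \<alpha> \<longleftrightarrow> (\<forall>x y. \<alpha> (x + y) = \<alpha> x + \<alpha> y) \<and>
     (\<forall>x y. \<alpha> ` hm x y = hm (\<alpha> x) (\<alpha> y))"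

definition alpha_nilpotent :: "('a::zero \<Rightarrow> 'a \<Rightarrow> 'a set) \<Rightarrow> ('a \<Rightarrow> 'a) \<Rightarrow> 'a \<Rightarrow> bool" where
  "alpha_nilpotent hm \<alpha> x \<longleftrightarrow> (\<exists>n>0. 0 \<in> \<alpha> ` hpow hm x n)"

definition Nil_alpha :: "('a::zero \<Rightarrow> 'a \<Rightarrow> 'a set) \<Rightarrow> ('a \<Rightarrow> 'a) \<Rightarrow> 'a set" where
  "Nil_alpha hm \<alpha> = {x. alpha_nilpotent hm \<alpha> x}"

end

theory Submission imports Defs "HOL-Library.Multiset" begin

lemma mh_ne: "mult_hyperring hm \<Longrightarrow> hm a b \<noteq> {}"
  unfolding mult_hyperring_def by (elim conjE allE)
lemma mh_assoc: "mult_hyperring hm \<Longrightarrow> hsetprod hm {a} (hm b c) = hsetprod hm (hm a b) {c}"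
  unfolding mult_hyperring_def by (elim conjE allE)
lemma mh_dr: "mult_hyperring hm \<Longrightarrow> hm (b + c) a \<subseteq> setsum_add (hm b a) (hm c a)"
  unfolding mult_hyperring_def by (elim conjE allE)
lemma mh_negl: "mult_hyperring hm \<Longrightarrow> hm (- a) b = uminus ` hm a b"
  unfolding mult_hyperring_def by (elim conjE allE)
lemma hc_comm: "hcommutative hm \<Longrightarrow> hm a b = hm b a"
  unfolding hcommutative_def by (elim allE)
lemma si_id: "scalar_identity hm e \<Longrightarrow> hm e a = {a}"
  unfolding scalar_identity_def by (elim allE)

lemma hs_single: "hsetprod hm {a} {b} = hm a b"
  unfolding hsetprod_def by simp

lemma hs_assoc:
  assumes "mult_hyperring hm"
  shows "hsetprod hm (hsetprod hm A B) C = hsetprod hm A (hsetprod hm B C)"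
proof -
  have ax: "\<And>a b c. (\<Union>y\<in>hm b c. hm a y) = (\<Union>x\<in>hm a b. hm x c)"
  proof -
    fix a b c
    have "hsetprod hm {a} (hm b c) = hsetprod hm (hm a b) {c}" using mh_assoc[OF assms] .
    then show "(\<Union>y\<in>hm b c. hm a y) = (\<Union>x\<in>hm a b. hm x c)" unfolding hsetprod_def by simp
  qed
  show ?thesis
  proof (rule set_eqI)
    fix z
    have "z \<in> hsetprod hm (hsetprod hm A B) C \<longleftrightarrow>
      (\<exists>a\<in>A. \<exists>b\<in>B. \<exists>c\<in>C. z \<in> (\<Union>x\<in>hm a b. hm x c))"
      unfolding hsetprod_def by blast
    also have "\<dots> \<longleftrightarrow> (\<exists>a\<in>A. \<exists>b\<in>B. \<exists>c\<in>C. z \<in> (\<Union>y\<in>hm b c. hm a y))"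
      by (simp only: ax)
    also have "\<dots> \<longleftrightarrow> z \<in> hsetprod hm A (hsetprod hm B C)"
      unfolding hsetprod_def by blast
    finally show "z \<in> hsetprod hm (hsetprod hm A B) C \<longleftrightarrow> z \<in> hsetprod hm A (hsetprod hm B C)" .
  qed
qed

lemma hs_comm:
  assumes "hcommutative hm"
  shows "hsetprod hm A B = hsetprod hm B A"
proof -
  have c: "\<And>a b. hm a b = hm b a" using hc_comm[OF assms] .
  have "\<And>A B. hsetprod hm A B \<subseteq> hsetprod hm B A"
  proof
    fix A B z assume "z \<in> hsetprod hm A B"
    then obtain a b where "a \<in> A" "b \<in> B" "z \<in> hm a b" unfolding hsetprod_def by blast
    then show "z \<in> hsetprod hm B A" using c[of a b] unfolding hsetprod_def by blast
  qed
  then show ?thesis by (simp add: subset_antisym)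
qed

lemma hs_neutral:
  assumes "hcommutative hm" "scalar_identity hm one"
  shows "hsetprod hm A {one} = A"
proof -
  have "\<And>a. hm a one = {a}" using hc_comm[OF assms(1)] si_id[OF assms(2)] by metis
  then show ?thesis unfolding hsetprod_def by simp
qed

lemma hs_mono:
  assumes "A \<subseteq> A'" "B \<subseteq> B'"
  shows "hsetprod hm A B \<subseteq> hsetprod hm A' B'"
  using assms unfolding hsetprod_def by blast

lemma hs_ne:
  assumes "mult_hyperring hm" "A \<noteq> {}" "B \<noteq> {}"
  shows "hsetprod hm A B \<noteq> {}"
proof -
  obtain a b where ab: "a \<in> A" "b \<in> B" using assms(2,3) by blast
  have "hm a b \<noteq> {}" using mh_ne[OF assms(1)] .
  then obtain z where "z \<in> hm a b" by blast
  then have "z \<in> hsetprod hm A B" using ab unfolding hsetprod_def by blast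
  then show ?thesis by blast
qed

lemma hs_distrib:
  assumes "mult_hyperring hm"
  shows "hsetprod hm {a + b} B \<subseteq> setsum_add (hsetprod hm {a} B) (hsetprod hm {b} B)"
proof
  fix z assume "z \<in> hsetprod hm {a + b} B"
  then obtain c where c: "c \<in> B" "z \<in> hm (a + b) c" unfolding hsetprod_def by blast
  then have "z \<in> setsum_add (hm a c) (hm b c)"
    using mh_dr[OF assms] by blast
  then obtain u v where "z = u + v" "u \<in> hm a c" "v \<in> hm b c" unfolding setsum_add_def by blast
  then show "z \<in> setsum_add (hsetprod hm {a} B) (hsetprod hm {b} B)"
    using c(1) unfolding setsum_add_def hsetprod_def by blast
qed

lemma hm_zero:
  assumes "mult_hyperring hm" "hcommutative hm" "scalar_identity hm one"
  shows "hm a 0 = {0}"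
proof -
  have "hm (one + - one) a \<subseteq> setsum_add (hm one a) (hm (- one) a)"
    using mh_dr[OF assms(1)] .
  moreover have "hm (- one) a = uminus ` hm one a"
    using mh_negl[OF assms(1)] .
  moreover have "hm one a = {a}" using si_id[OF assms(3)] .
  ultimately have "hm 0 a \<subseteq> setsum_add {a} {-a}" by simp
  then have "hm 0 a \<subseteq> {0}" unfolding setsum_add_def by simp
  moreover have "hm 0 a \<noteq> {}" using mh_ne[OF assms(1)] .
  ultimately have "hm 0 a = {0}" by blast
  moreover have "hm a 0 = hm 0 a" using hc_comm[OF assms(2)] .
  ultimately show "hm a 0 = {0}" by simp
qed

lemma ideal_absorb:
  assumes "\<forall>r. \<forall>x\<in>I. hm r x \<subseteq> I" "A \<subseteq> I"
  shows "hsetprod hm B A \<subseteq> I"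
  using assms unfolding hsetprod_def by blast

locale HR =
  fixes hm :: "'a::ab_group_add \<Rightarrow> 'a \<Rightarrow> 'a set" and one :: 'a
  assumes mh: "mult_hyperring hm" and hc: "hcommutative hm" and si: "scalar_identity hm one"
begin

sublocale H: comm_monoid_mset "hsetprod hm" "{one}"
proof unfold_locales
  show "\<And>a b c. hsetprod hm (hsetprod hm a b) c = hsetprod hm a (hsetprod hm b c)"
    by (rule hs_assoc[OF mh])
  show "\<And>a b. hsetprod hm a b = hsetprod hm b a" by (rule hs_comm[OF hc])
  show "\<And>a. hsetprod hm a {one} = a" by (rule hs_neutral[OF hc si])
qed

abbreviation Pw :: "nat \<Rightarrow> 'a \<Rightarrow> 'a set" where
  "Pw n x \<equiv> H.F (replicate_mset n {x})"

lemma Pw_Suc: "Pw (Suc n) x = hsetprod hm {x} (Pw n x)"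
  by simp

lemma Pw_add: "Pw (n + m) x = hsetprod hm (Pw n x) (Pw m x)"
  by (induction n) (simp_all add: H.assoc)

lemma Pw_ne: "Pw n x \<noteq> {}"
  by (induction n) (simp_all add: hs_ne[OF mh])

lemma lprod_F: "xs \<noteq> [] \<Longrightarrow> lprod hm xs = H.F (mset (map (\<lambda>a. {a}) xs))"
proof (induction xs)
  case Nil then show ?case by simp
next
  case (Cons a xs)
  then show ?case by (cases xs) simp_all
qed

lemma hpow_Pw: "n > 0 \<Longrightarrow> hpow hm x n = Pw n x"
proof (induction n)
  case 0 then show ?case by simp
next
  case (Suc n)
  then show ?case by (cases n) (simp_all add: H.commute)
qed

lemma hpow_lprod: "n > 0 \<Longrightarrow> hpow hm x n = lprod hm (replicate n x)"
  using hpow_Pw lprod_F[of "replicate n x"] by (simp add: mset_replicate)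

lemma Pw_sub:
  assumes "z \<in> hm r x"
  shows "Pw n z \<subseteq> hsetprod hm (Pw n r) (Pw n x)"
proof (induction n)
  case 0 then show ?case by simp
next
  case (Suc n)
  have "Pw (Suc n) z = hsetprod hm {z} (Pw n z)" by simp
  also have "\<dots> \<subseteq> hsetprod hm (hsetprod hm {r} {x}) (hsetprod hm (Pw n r) (Pw n x))"
    using Suc assms by (intro hs_mono) (simp_all add: hs_single)
  also have "\<dots> = hsetprod hm (Pw (Suc n) r) (Pw (Suc n) x)"
    by (simp add: H.assoc H.commute H.left_commute)
  finally show ?case .
qed

lemma Pw_sum:
  assumes I: "\<forall>r. \<forall>v\<in>I. hm r v \<subseteq> I" and Iadd: "\<forall>u\<in>I. \<forall>v\<in>I. u + v \<in> I"
    and x: "Pw n x \<subseteq> I" and y: "Pw m y \<subseteq> I"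
  shows "n + m \<le> Suc (i + j + k) \<Longrightarrow>
    hsetprod hm (Pw k (x + y)) (hsetprod hm (Pw i x) (Pw j y)) \<subseteq> I"
proof (induction k arbitrary: i j)
  case 0
  have "hsetprod hm (Pw 0 (x + y)) (hsetprod hm (Pw i x) (Pw j y)) = hsetprod hm (Pw i x) (Pw j y)"
    by simp
  moreover have "hsetprod hm (Pw i x) (Pw j y) \<subseteq> I"
  proof (cases "n \<le> i")
    case True
    then have "Pw i x = hsetprod hm (Pw n x) (Pw (i - n) x)"
      using Pw_add[of n "i - n" x] by simp
    then have "hsetprod hm (Pw i x) (Pw j y) = hsetprod hm (hsetprod hm (Pw (i - n) x) (Pw j y)) (Pw n x)"
      by (simp add: H.assoc H.commute H.left_commute)
    then show ?thesis using ideal_absorb[OF I x] by simp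
  next
    case False
    then have "m \<le> j" using 0 by simp
    then have "Pw j y = hsetprod hm (Pw m y) (Pw (j - m) y)"
      using Pw_add[of m "j - m" y] by simp
    then have "hsetprod hm (Pw i x) (Pw j y) = hsetprod hm (hsetprod hm (Pw i x) (Pw (j - m) y)) (Pw m y)"
      by (simp add: H.assoc H.commute H.left_commute)
    then show ?thesis using ideal_absorb[OF I y] by simp
  qed
  ultimately show ?case by simp
next
  case (Suc k)
  define B where "B = hsetprod hm (Pw k (x + y)) (hsetprod hm (Pw i x) (Pw j y))"
  have eq: "hsetprod hm (Pw (Suc k) (x + y)) (hsetprod hm (Pw i x) (Pw j y)) = hsetprod hm {x + y} B"
    unfolding B_def by (simp add: H.assoc)
  have bx: "hsetprod hm {x} B = hsetprod hm (Pw k (x + y)) (hsetprod hm (Pw (Suc i) x) (Pw j y))"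
    unfolding B_def by (simp add: H.assoc H.commute H.left_commute)
  have by': "hsetprod hm {y} B = hsetprod hm (Pw k (x + y)) (hsetprod hm (Pw i x) (Pw (Suc j) y))"
    unfolding B_def by (simp add: H.assoc H.commute H.left_commute)
  have "hsetprod hm (Pw k (x + y)) (hsetprod hm (Pw (Suc i) x) (Pw j y)) \<subseteq> I"
    by (rule Suc.IH) (use Suc.prems in simp)
  then have "hsetprod hm {x} B \<subseteq> I" unfolding bx .
  moreover have "hsetprod hm (Pw k (x + y)) (hsetprod hm (Pw i x) (Pw (Suc j) y)) \<subseteq> I"
    by (rule Suc.IH) (use Suc.prems in simp)
  then have "hsetprod hm {y} B \<subseteq> I" unfolding by' .
  ultimately have "setsum_add (hsetprod hm {x} B) (hsetprod hm {y} B) \<subseteq> I"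
    using Iadd unfolding setsum_add_def by blast
  then show ?case unfolding eq using hs_distrib[OF mh, of x y B] by blast
qed

end

theorem mainTheorem10:
  fixes hm :: "'a::ab_group_add \<Rightarrow> 'a \<Rightarrow> 'a set"
    and \<alpha> :: "'a \<Rightarrow> 'a" and one :: 'a
  assumes "mult_hyperring hm"
    and "hcommutative hm"
    and "scalar_identity hm one"
    and "\<forall>I. hyperideal hm I \<longrightarrow> C_hyperideal hm I"
    and "good_endomorphism hm \<alpha>"
  shows "hyperideal hm (Nil_alpha hm \<alpha>)"
proof -
  interpret HR hm one using assms(1-3) by unfold_locales
  have add: "\<alpha> (x + y) = \<alpha> x + \<alpha> y" for x y
    using assms(5) unfolding good_endomorphism_def by (elim conjE allE)
  have mul: "\<alpha> ` hm x y = hm (\<alpha> x) (\<alpha> y)" for x y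
    using assms(5) unfolding good_endomorphism_def by (elim conjE allE)
  have a0: "\<alpha> 0 = 0" using add[of 0 0] by simp
  have aneg: "\<alpha> (- x) = - \<alpha> x" for x
  proof -
    have "\<alpha> x + \<alpha> (- x) = 0" using add[of x "- x"] a0 by simp
    then show ?thesis using minus_unique by metis
  qed
  have asub: "\<alpha> (x - y) = \<alpha> x - \<alpha> y" for x y
  proof -
    have "\<alpha> (x + - y) = \<alpha> x + - \<alpha> y" using add[of x "- y"] aneg[of y] by (simp only:)
    then show ?thesis by (simp only: diff_conv_add_uminus)
  qed
  define K where "K = {v. \<alpha> v = 0}"
  have Kabs: "\<forall>r. \<forall>v\<in>K. hm r v \<subseteq> K"
  proof (intro allI ballI subsetI)
    fix r v z assume v: "v \<in> K" and z: "z \<in> hm r v"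
    have "\<alpha> ` hm r v = hm (\<alpha> r) 0" using mul v unfolding K_def by simp
    also have "\<dots> = {0}" using hm_zero[OF assms(1-3)] .
    finally show "z \<in> K" using z unfolding K_def by blast
  qed
  have Kadd: "\<forall>u\<in>K. \<forall>v\<in>K. u + v \<in> K" unfolding K_def using add by simp
  have Kid: "hyperideal hm K"
    unfolding hyperideal_def
  proof (intro conjI)
    show "K \<noteq> {}" using a0 unfolding K_def by blast
    show "\<forall>x\<in>K. \<forall>y\<in>K. x - y \<in> K"
      unfolding K_def using asub by simp
    show "\<forall>r. \<forall>x\<in>K. hm r x \<subseteq> K" using Kabs .
  qed
  then have KC: "C_hyperideal hm K" by (rule assms(4)[rule_format])
  have KCl: "hpow hm x n \<subseteq> K" if "n > 0" "hpow hm x n \<inter> K \<noteq> {}" for n x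
  proof -
    have "replicate n x \<noteq> []" using that(1) by simp
    moreover have "\<forall>rs. rs \<noteq> [] \<longrightarrow> lprod hm rs \<inter> K \<noteq> {} \<longrightarrow> lprod hm rs \<subseteq> K"
      using KC unfolding C_hyperideal_def by (elim conjE)
    ultimately show ?thesis using that(2) unfolding hpow_lprod[OF that(1)] by blast
  qed
  define N where "N = {x. \<exists>n>0. Pw n x \<subseteq> K}"
  have Neq: "Nil_alpha hm \<alpha> = N"
  proof (rule set_eqI)
    fix x
    show "x \<in> Nil_alpha hm \<alpha> \<longleftrightarrow> x \<in> N"
    proof
      assume "x \<in> Nil_alpha hm \<alpha>"
      then obtain n where n: "n > 0" "0 \<in> \<alpha> ` hpow hm x n"
        unfolding Nil_alpha_def alpha_nilpotent_def by blast
      then obtain w where w: "w \<in> hpow hm x n" "0 = \<alpha> w" by blast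
      then have "w \<in> hpow hm x n \<inter> K" unfolding K_def by simp
      then have "hpow hm x n \<inter> K \<noteq> {}" by blast
      then have "hpow hm x n \<subseteq> K" using KCl n(1) by blast
      then show "x \<in> N" using n(1) hpow_Pw[OF n(1)] unfolding N_def by auto
    next
      assume "x \<in> N"
      then obtain n where n: "n > 0" "Pw n x \<subseteq> K" unfolding N_def by blast
      obtain w where "w \<in> Pw n x" using Pw_ne by blast
      then have w: "w \<in> hpow hm x n" "\<alpha> w = 0" using n hpow_Pw[OF n(1)] unfolding K_def by auto
      have "0 \<in> \<alpha> ` hpow hm x n" using image_eqI[of 0 \<alpha> w] w by simp
      then show "x \<in> Nil_alpha hm \<alpha>"
        using n(1) unfolding Nil_alpha_def alpha_nilpotent_def by blast
    qed
  qed
  have absorb: "z \<in> N" if xN: "x \<in> N" and zx: "z \<in> hm r x" for r x z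
  proof -
    obtain n where n: "n > 0" "Pw n x \<subseteq> K" using xN unfolding N_def by blast
    have "Pw n z \<subseteq> hsetprod hm (Pw n r) (Pw n x)" using Pw_sub[OF zx] .
    also have "\<dots> \<subseteq> K" using ideal_absorb[OF Kabs n(2)] .
    finally show ?thesis using n(1) unfolding N_def by blast
  qed
  have addN: "x + y \<in> N" if xN: "x \<in> N" and yN: "y \<in> N" for x y
  proof -
    obtain n where n: "n > 0" "Pw n x \<subseteq> K" using xN unfolding N_def by blast
    obtain m where m: "m > 0" "Pw m y \<subseteq> K" using yN unfolding N_def by blast
    have "hsetprod hm (Pw (n + m - 1) (x + y)) (hsetprod hm (Pw 0 x) (Pw 0 y)) \<subseteq> K"
      using Pw_sum[OF Kabs Kadd n(2) m(2), of 0 0 "n + m - 1"] n(1) m(1) by simp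
    then have "Pw (n + m - 1) (x + y) \<subseteq> K" by simp
    then show ?thesis using n(1) m(1) unfolding N_def
      by (intro CollectI exI[of _ "n + m - 1"]) simp
  qed
  have negN: "- x \<in> N" if "x \<in> N" for x
  proof -
    have "hm (- one) x = {- x}" using mh_negl[OF assms(1)] si_id[OF assms(3)] by simp
    then show ?thesis using absorb[OF that, of "- x" "- one"] by simp
  qed
  have zN: "0 \<in> N" unfolding N_def K_def using a0
    by (intro CollectI exI[of _ 1]) simp
  show ?thesis unfolding Neq hyperideal_def
  proof (intro conjI)
    show "N \<noteq> {}" using zN by blast
    show "\<forall>x\<in>N. \<forall>y\<in>N. x - y \<in> N" unfolding diff_conv_add_uminus using addN negN by blast
    show "\<forall>r. \<forall>x\<in>N. hm r x \<subseteq> N" using absorb by blast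
  qed
qed

end
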